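(* Let $f,g:\mathbb{R}\to\mathbb{R}^2$ be continuous injections that are homeomorphisms onto their images, and let $M\subseteq\mathbb{R}$ be closed and nowhere dense. Then $g(\mathbb{R})\cap f(M)$ is meager in the subspace $g(\mathbb{R})$. *)

theory Defs
  imports "HOL-Analysis.Analysis"
begin

definition nowhere_dense_in :: "'a topology \<Rightarrow> 'a set \<Rightarrow> bool" where
  "nowhere_dense_in X S \<longleftrightarrow> S \<subseteq> topspace X \<and> X interior_of (X closure_of S) = {}"

definition meager_in :: "'a topology \<Rightarrow> 'a set \<Rightarrow> bool" where
  "meager_in X S \<longleftrightarrow> S \<subseteq> topspace X \<and>
     (\<exists>F. countable F \<and> (\<forall>N\<in>F. nowhere_dense_in X N) \<and> S \<subseteq> \<Union>F)"

end

theory Submission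
  imports Defs
begin

theorem mainTheorem7:
  fixes f g :: "real \<Rightarrow> real^2" and M :: "real set"
  assumes "\<exists>f'. homeomorphism UNIV (range f) f f'"
    and "\<exists>g'. homeomorphism UNIV (range g) g g'"
    and "closed M"
    and "nowhere_dense_in euclidean M"
  shows "meager_in (subtopology euclidean (range g)) (range g \<inter> f ` M)"
proof -
  obtain f' where hf: "homeomorphism UNIV (range f) f f'" using assms(1) by blast
  obtain g' where hg: "homeomorphism UNIV (range g) g g'" using assms(2) by blast
  have intM: "interior M = {}"
  proof -
    have "euclidean interior_of (euclidean closure_of M) = {}"
      using assms(4) unfolding nowhere_dense_in_def by blast
    thus ?thesis using assms(3) by (simp add: closure_closed)
  qed
  have ff': "\<And>x. f' (f x) = x" using hf by (simp add: homeomorphism_def)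
  have gg': "\<And>x. g' (g x) = x" using hg by (auto simp: homeomorphism_def)
  have contf': "continuous_on (range f) f'" using hf by (simp add: homeomorphism_def)
  have contg: "continuous_on UNIV g" using hg by (auto simp: homeomorphism_def)
  let ?X = "subtopology euclidean (range g)"
  define N where "N n = range g \<inter> f ` (M \<inter> {- real n..real n})" for n :: nat
  have ND: "nowhere_dense_in ?X (N n)" for n
  proof -
    have cpt: "compact (f ` (M \<inter> {- real n..real n}))"
    proof (rule compact_continuous_image)
      show "continuous_on (M \<inter> {- real n..real n}) f"
        using hf by (auto simp: homeomorphism_def intro: continuous_on_subset)
      show "compact (M \<inter> {- real n..real n})"
        using assms(3) by (simp add: closed_Int_compact)
    qed
    hence "closedin ?X (N n)" unfolding N_def
      by (simp add: closedin_closed_Int compact_imp_closed)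
    hence cl: "?X closure_of (N n) = N n" by (simp add: closure_of_eq)
    have "?X interior_of (N n) = {}"
      unfolding interior_of_eq_empty
    proof (intro allI impI)
      fix U assume U: "openin ?X U \<and> U \<subseteq> N n"
      have "openin (top_of_set UNIV) (g' ` U)"
        by (rule homeomorphism_imp_open_map[OF homeomorphism_symD[OF hg]]) (use U in simp)
      hence oV: "open (g' ` U)" by simp
      define h where "h = f' \<circ> g"
      have Ug: "U \<subseteq> range g" using U N_def by auto
      have gg: "\<And>y. y \<in> range g \<Longrightarrow> g (g' y) = y" using hg by (auto simp: homeomorphism_def)
      have gV: "g ` (g' ` U) = U"
        using Ug gg by (auto simp: image_image) (metis gg image_eqI subsetD)
      have UN: "U \<subseteq> f ` (M \<inter> {- real n..real n})" using U N_def by auto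
      have "continuous_on (g' ` U) h" unfolding h_def
      proof (rule continuous_on_compose)
        show "continuous_on (g' ` U) g" using contg continuous_on_subset by blast
        have "U \<subseteq> range f" using UN by blast
        thus "continuous_on (g ` g' ` U) f'" unfolding gV using contf' continuous_on_subset by blast
      qed
      moreover have "inj_on h (g' ` U)"
      proof
        fix x y assume x: "x \<in> g' ` U" and y: "y \<in> g' ` U" and e: "h x = h y"
        have "g x \<in> range f" "g y \<in> range f" using x y gV UN by blast+
        then obtain a b where a: "g x = f a" and b: "g y = f b" by blast
        have "a = b" using e a b ff' by (simp add: h_def)
        hence "g x = g y" using a b by simp
        thus "x = y" by (metis gg')
      qed
      ultimately have "open (h ` (g' ` U))" using invariance_of_domain oV by blast
      moreover have "h ` (g' ` U) \<subseteq> M"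
      proof
        fix z assume "z \<in> h ` (g' ` U)"
        then obtain x where x: "x \<in> g' ` U" and z: "z = h x" by blast
        have "g x \<in> f ` M" using x gV UN by blast
        then obtain a where "a \<in> M" "g x = f a" by blast
        thus "z \<in> M" using z ff' by (simp add: h_def)
      qed
      ultimately have "h ` (g' ` U) = {}" using intM interior_maximal by blast
      thus "U = {}" by simp
    qed
    moreover have "N n \<subseteq> topspace ?X" by (auto simp: N_def)
    ultimately show ?thesis unfolding nowhere_dense_in_def cl by simp
  qed
  have cover: "range g \<inter> f ` M \<subseteq> \<Union>(range N)"
  proof
    fix x assume "x \<in> range g \<inter> f ` M"
    then obtain m where m: "m \<in> M" "x = f m" "x \<in> range g" by blast
    obtain n :: nat where "\<bar>m\<bar> \<le> real n" using real_arch_simple by blast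
    hence "m \<in> M \<inter> {- real n..real n}" using m by auto
    hence "x \<in> N n" using m unfolding N_def by blast
    thus "x \<in> \<Union>(range N)" by blast
  qed
  show ?thesis unfolding meager_in_def
    using ND cover by (intro conjI exI[of _ "range N"]) auto
qed

end
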